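(* Let $p$ be a prime, $s,m$ positive integers, $n=sm$, $c\in\mathbb{F}_{p^s}$, and $F\in\mathbb{F}_{p^s}[x]$ viewed as a function $\mathbb{F}_{p^n}\to\mathbb{F}_{p^n}$. Let $a,b\in\mathbb{F}_{p^s}$, with $a\neq 0$ if $c=1$. (i) If $F$ is PcN, then the equation $F(x+a)-cF(x)=b$ has no solution $x\in\mathbb{F}_{p^n}\setminus\mathbb{F}_{p^s}$. (ii) If $F$ is APcN and $m$ is odd, then the equation $F(x+a)-cF(x)=b$ has no solution $x\in\mathbb{F}_{p^n}\setminus\mathbb{F}_{p^s}$.
   Context: For $F:\mathbb{F}_{p^n}\to\mathbb{F}_{p^n}$ and $c\in\mathbb{F}_{p^n}$, let ${}_c\Delta_F(a,b)=\#\{x\in\mathbb{F}_{p^n}: F(x+a)-cF(x)=b\}$ and $\delta_{F,c}=\max\{{}_c\Delta_F(a,b): a,b\in\mathbb{F}_{p^n},\ a\neq 0\text{ if } c=1\}$. $F$ is perfect $c$-nonlinear (PcN) if $\delta_{F,c}=1$ and almost perfect $c$-nonlinear (APcN) if $\delta_{F,c}=2$. *)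

theory Defs
  imports "HOL-Computational_Algebra.Polynomial" "HOL-Library.Cardinality"
begin

definition c_Delta :: "('a::field \<Rightarrow> 'a) \<Rightarrow> 'a \<Rightarrow> 'a \<Rightarrow> 'a \<Rightarrow> nat" where
  "c_Delta f c a b = card {x. f (x + a) - c * f x = b}"

definition c_delta :: "('a::{field,finite} \<Rightarrow> 'a) \<Rightarrow> 'a \<Rightarrow> nat" where
  "c_delta f c = Max {c_Delta f c a b | a b. \<not> (c = 1 \<and> a = 0)}"

definition PcN :: "('a::{field,finite} \<Rightarrow> 'a) \<Rightarrow> 'a \<Rightarrow> bool" where
  "PcN f c \<longleftrightarrow> c_delta f c = 1"

definition APcN :: "('a::{field,finite} \<Rightarrow> 'a) \<Rightarrow> 'a \<Rightarrow> bool" where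
  "APcN f c \<longleftrightarrow> c_delta f c = 2"

definition subfield_of_order :: "nat \<Rightarrow> 'a::field set" where
  "subfield_of_order q = {x. x ^ q = x}"

end

theory Submission
  imports Defs "HOL-Computational_Algebra.Primes"
begin

lemma fin_field_pow_card:
  fixes x :: "'a :: {field,finite}"
  shows "x ^ card (UNIV :: 'a set) = x"
proof (cases "x = 0")
  case False
  have "x * (\<Prod>y\<in>UNIV-{0}. x * y) = x * x ^ (card (UNIV :: 'a set) - 1) * \<Prod>(UNIV-{0})"
    by (simp add: prod.distrib mult_ac)
  also have "x * x ^ (card (UNIV :: 'a set) - 1) = x ^ Suc (card (UNIV :: 'a set) - 1)"
    by (subst power_Suc) auto
  also have "Suc (card (UNIV :: 'a set) - 1) = card (UNIV :: 'a set)"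
    using finite_UNIV_card_ge_0[where ?'a = 'a] by simp
  also have "(\<Prod>y\<in>UNIV-{0}. x * y) = (\<Prod>y\<in>UNIV-{0}. y)"
    by (rule prod.reindex_bij_witness[of _ "\<lambda>y. y / x" "\<lambda>y. x * y"]) (use False in auto)
  finally show ?thesis
    by simp
qed (use finite_UNIV_card_ge_0[where ?'a = 'a] in auto)

lemma card_of_nat_zero:
  "of_nat (card (UNIV :: 'a :: {field,finite} set)) = (0::'a)"
proof -
  have "(\<Sum>y\<in>(UNIV::'a set). y) = (\<Sum>y\<in>UNIV. 1 + y)"
    by (rule sum.reindex_bij_witness[of _ "\<lambda>y. 1 + y" "\<lambda>y. y - 1"]) auto
  also have "\<dots> = of_nat (card (UNIV :: 'a set)) + (\<Sum>y\<in>UNIV. y)"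
    by (simp add: sum.distrib)
  finally show ?thesis by simp
qed

lemma char_prime: "prime CHAR('a::{field,finite})"
proof -
  have "CHAR('a) > 0" by (rule finite_imp_CHAR_pos) simp
  then show ?thesis using prime_CHAR_semidom by blast
qed

lemma char_eq:
  fixes p s m :: nat
  assumes "prime p" "of_nat (p ^ (s * m)) = (0::'a::{field,finite})"
  shows "CHAR('a) = p"
proof -
  have pr: "prime CHAR('a)" by (rule char_prime)
  have "CHAR('a) dvd p ^ (s * m)" using assms(2) by (simp only: of_nat_eq_0_iff_char_dvd)
  then have "CHAR('a) dvd p" using pr prime_dvd_power by blast
  then show "CHAR('a) = p" using pr assms(1) primes_dvd_imp_eq by blast
qed

lemma delta_bound:
  fixes f :: "'a::{field,finite} \<Rightarrow> 'a"
  assumes "\<not> (c = 1 \<and> a = 0)"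
  shows "c_Delta f c a b \<le> c_delta f c"
proof -
  let ?S = "{c_Delta f c a b | a b. \<not> (c = 1 \<and> a = 0)}"
  have sub: "?S \<subseteq> (\<lambda>(a,b). c_Delta f c a b) ` UNIV"
  proof
    fix z assume "z \<in> ?S"
    then obtain a' b' where "z = c_Delta f c a' b'" by blast
    then show "z \<in> (\<lambda>(a,b). c_Delta f c a b) ` UNIV"
      by (intro image_eqI[of _ _ "(a', b')"]) simp_all
  qed
  have fin: "finite ?S"
    by (rule finite_subset[OF sub]) (rule finite_imageI, rule finite_class.finite_UNIV)
  have mem: "c_Delta f c a b \<in> ?S" using assms by blast
  show ?thesis unfolding c_delta_def by (rule Max_ge[OF fin mem])
qed

theorem proposition2p3:
  fixes F :: "'a::{field,finite} poly" and c a b :: 'a and p s m :: nat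
  assumes "prime p" and "s > 0" and "m > 0"
    and "CARD('a) = p ^ (s * m)"
    and "\<forall>i. coeff F i \<in> subfield_of_order (p ^ s)"
    and "c \<in> subfield_of_order (p ^ s)"
    and "a \<in> subfield_of_order (p ^ s)" and "b \<in> subfield_of_order (p ^ s)"
    and "c = 1 \<longrightarrow> a \<noteq> 0"
  shows "(PcN (poly F) c \<longrightarrow>
            \<not> (\<exists>x. x \<notin> subfield_of_order (p ^ s) \<and> poly F (x + a) - c * poly F x = b))
       \<and> (APcN (poly F) c \<and> odd m \<longrightarrow>
            \<not> (\<exists>x. x \<notin> subfield_of_order (p ^ s) \<and> poly F (x + a) - c * poly F x = b))"
proof -
  define q where "q = p ^ s"
  have "of_nat (p ^ (s * m)) = (0::'a)" using card_of_nat_zero[where 'a='a] assms(4) by simp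
  then have ch: "CHAR('a) = p" using assms(1) by (intro char_eq) auto
  have cpr: "prime CHAR('a)" by (rule char_prime)
  have fadd: "(x + y) ^ q = x ^ q + y ^ q" for x y :: 'a
    by (rule freshmans_dream'[where n=s]) (simp_all add: cpr ch q_def assms(1))
  have fsum: "(sum f A) ^ q = sum (\<lambda>i. f i ^ q) A" for f :: "nat \<Rightarrow> 'a" and A
    by (rule freshmans_dream_sum'[where n=s]) (simp_all add: cpr ch q_def assms(1))
  have fsub: "(x - y) ^ q = x ^ q - y ^ q" for x y :: 'a
  proof -
    have "x ^ q = ((x - y) + y) ^ q" by simp
    also have "\<dots> = (x - y) ^ q + y ^ q" by (rule fadd)
    finally show ?thesis by (metis add_diff_cancel_right')
  qed
  have fix_:"z ^ q = z" if "z \<in> subfield_of_order (p ^ s)" for z :: 'a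
    using that unfolding subfield_of_order_def q_def by simp
  have coefq: "coeff F i ^ q = coeff F i" for i using fix_ assms(5) by blast
  have cq: "c ^ q = c" using fix_ assms(6) by blast
  have aq: "a ^ q = a" using fix_ assms(7) by blast
  have bq: "b ^ q = b" using fix_ assms(8) by blast
  have fpoly: "(poly F z) ^ q = poly F (z ^ q)" for z
  proof -
    have "(poly F z) ^ q = (\<Sum>i\<le>degree F. (coeff F i * z ^ i) ^ q)"
      unfolding poly_altdef by (rule fsum)
    also have "\<dots> = (\<Sum>i\<le>degree F. coeff F i * (z ^ q) ^ i)"
    proof (rule sum.cong[OF refl])
      fix i
      have "(z ^ i) ^ q = (z ^ q) ^ i"
        by (metis power_mult mult.commute)
      then show "(coeff F i * z ^ i) ^ q = coeff F i * (z ^ q) ^ i"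
        by (simp only: power_mult_distrib coefq)
    qed
    finally show ?thesis by (simp only: poly_altdef)
  qed
  have fsol: "poly F (x ^ q + a) - c * poly F (x ^ q) = b"
    if "poly F (x + a) - c * poly F x = b" for x
  proof -
    have "(poly F (x + a) - c * poly F x) ^ q = b ^ q" using that by simp
    then show ?thesis
      by (simp only: fsub power_mult_distrib fpoly fadd cq aq bq)
  qed
  have qm: "x ^ (q ^ m) = x" for x :: 'a
  proof -
    have "q ^ m = CARD('a)" using assms(4) by (simp add: q_def power_mult)
    then show ?thesis using fin_field_pow_card[of x] by simp
  qed
  have inj: "x = y" if "x ^ q = y ^ q" for x y :: 'a
  proof -
    have e: "q ^ m = q * q ^ (m - 1)" using assms(3) by (cases m) auto
    have "x = (x ^ q) ^ (q ^ (m - 1))" using qm[of x] unfolding e power_mult by simp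
    also have "\<dots> = (y ^ q) ^ (q ^ (m - 1))" using that by simp
    also have "\<dots> = y" using qm[of y] unfolding e power_mult by simp
    finally show ?thesis .
  qed
  have bnd: "c_Delta (poly F) c a b \<le> c_delta (poly F) c"
    by (rule delta_bound) (use assms(9) in auto)
  have fin: "finite {x. poly F (x + a) - c * poly F x = b}" by simp
  show ?thesis
  proof (intro conjI impI notI)
    assume P: "PcN (poly F) c"
      and "\<exists>x. x \<notin> subfield_of_order (p ^ s) \<and> poly F (x + a) - c * poly F x = b"
    then obtain x where x: "x ^ q \<noteq> x" "poly F (x + a) - c * poly F x = b"
      unfolding subfield_of_order_def q_def by auto
    have "{x, x ^ q} \<subseteq> {x. poly F (x + a) - c * poly F x = b}" using x fsol by auto
    then have "card {x, x ^ q} \<le> c_Delta (poly F) c a b"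
      unfolding c_Delta_def using card_mono fin by blast
    then show False using x(1) bnd P unfolding PcN_def by simp
  next
    assume P: "APcN (poly F) c \<and> odd m"
      and "\<exists>x. x \<notin> subfield_of_order (p ^ s) \<and> poly F (x + a) - c * poly F x = b"
    then obtain x where x: "x ^ q \<noteq> x" "poly F (x + a) - c * poly F x = b"
      unfolding subfield_of_order_def q_def by auto
    obtain k where k: "m = 2 * k + 1" using P oddE by blast
    have x2: "(x ^ q) ^ q \<noteq> x"
    proof
      assume h: "(x ^ q) ^ q = x"
      have "x ^ (q ^ (2 * j)) = x" for j
      proof (induction j)
        case (Suc j)
        have e: "q ^ (2 * Suc j) = q ^ (2 * j) * (q * q)" by (simp add: mult_ac)
        have "x ^ (q ^ (2 * Suc j)) = (x ^ (q ^ (2 * j))) ^ (q * q)"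
          unfolding e by (rule power_mult)
        also have "\<dots> = x" by (simp only: Suc.IH) (simp add: power_mult h)
        finally show ?case .
      qed simp
      then have "x ^ (q ^ (2 * k) * q) = x ^ q" by (simp add: power_mult)
      then have "x ^ (q ^ m) = x ^ q" by (simp add: k mult.commute)
      then show False using qm x(1) by simp
    qed
    have x12: "(x ^ q) ^ q \<noteq> x ^ q" using inj x(1) by blast
    have "{x, x ^ q, (x ^ q) ^ q} \<subseteq> {x. poly F (x + a) - c * poly F x = b}"
      using x fsol by auto
    then have "card {x, x ^ q, (x ^ q) ^ q} \<le> c_Delta (poly F) c a b"
      unfolding c_Delta_def using card_mono fin by blast
    then show False using x(1) x2 x12 bnd P unfolding APcN_def by simp
  qed
qed

end
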